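(* Let $f:\mathbb{R}^n_{>0} \to \mathbb{R}^n_{>0}$ be order-preserving, homogeneous, multiplicatively convex, and analytic. Then $f$ is type K order-preserving if and only if for every $i \in [n]$ there is an arc from $i$ to itself in $\mathcal{G}(f)$, i.e. $\lim_{t\to\infty} f(\exp(t e_i))_i = \infty$ for every $i\in[n]$.
   Context: $[n] = \{1,\dots,n\}$; $e_i$ are the standard basis vectors; $\log$ and $\exp$ act entrywise. The order on $\mathbb{R}^n$ is entrywise. $f$ is order-preserving if $x \le y \Rightarrow f(x)\le f(y)$; homogeneous if $f(tx) = t f(x)$ for $t > 0$; analytic if each coordinate is real analytic; multiplicatively convex if $\log\circ f\circ\exp$ has convex coordinate functions on $\mathbb{R}^n$. $f$ is type K order-preserving if for any $x \le y$ there is $\epsilon>0$ with $f(y) - f(x) \ge \epsilon(y-x)$. The directed graph $\mathcal{G}(f)$ has vertices $[n]$ and an arc from $i$ to $j$ iff $\lim_{t\to\infty} f(\exp(t e_j))_i = \infty$. *)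

theory Defs
  imports "HOL-Analysis.Analysis"
begin

definition pos_cone :: "(real ^ 'n) set" where
  "pos_cone = {x. \<forall>i. 0 < x $ i}"

definition vle :: "real ^ 'n \<Rightarrow> real ^ 'n \<Rightarrow> bool" where
  "vle x y \<longleftrightarrow> (\<forall>i. x $ i \<le> y $ i)"

definition maps_pos_cone :: "(real ^ 'n \<Rightarrow> real ^ 'n) \<Rightarrow> bool" where
  "maps_pos_cone f \<longleftrightarrow> (\<forall>x \<in> pos_cone. f x \<in> pos_cone)"

definition order_preserving :: "(real ^ 'n \<Rightarrow> real ^ 'n) \<Rightarrow> bool" where
  "order_preserving f \<longleftrightarrow>
     (\<forall>x \<in> pos_cone. \<forall>y \<in> pos_cone. vle x y \<longrightarrow> vle (f x) (f y))"

definition homogeneous :: "(real ^ 'n \<Rightarrow> real ^ 'n) \<Rightarrow> bool" where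
  "homogeneous f \<longleftrightarrow> (\<forall>x \<in> pos_cone. \<forall>t > 0. f (t *\<^sub>R x) = t *\<^sub>R f x)"

definition vexp :: "real ^ 'n \<Rightarrow> real ^ 'n" where
  "vexp y = (\<chi> i. exp (y $ i))"

definition mult_convex :: "(real ^ 'n \<Rightarrow> real ^ 'n) \<Rightarrow> bool" where
  "mult_convex f \<longleftrightarrow> (\<forall>i. convex_on UNIV (\<lambda>y. ln (f (vexp y) $ i)))"

text \<open>Real analyticity of a real-valued function of n variables on an open set S:
  locally the sum of an (absolutely/unconditionally) convergent multivariate power series.\<close>
definition real_analytic_on :: "(real ^ 'n \<Rightarrow> real) \<Rightarrow> (real ^ 'n) set \<Rightarrow> bool" where
  "real_analytic_on g S \<longleftrightarrow>
     (\<forall>x \<in> S. \<exists>r > 0. \<exists>c :: ('n \<Rightarrow> nat) \<Rightarrow> real.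
        \<forall>y \<in> ball x r. ((\<lambda>\<alpha>. c \<alpha> * (\<Prod>i\<in>UNIV. (y $ i - x $ i) ^ \<alpha> i)) has_sum g y) UNIV)"

definition analytic_map :: "(real ^ 'n \<Rightarrow> real ^ 'n) \<Rightarrow> bool" where
  "analytic_map f \<longleftrightarrow> (\<forall>i. real_analytic_on (\<lambda>x. f x $ i) pos_cone)"

definition typeK_order_preserving :: "(real ^ 'n \<Rightarrow> real ^ 'n) \<Rightarrow> bool" where
  "typeK_order_preserving f \<longleftrightarrow>
     (\<forall>x \<in> pos_cone. \<forall>y \<in> pos_cone. vle x y \<longrightarrow>
        (\<exists>\<epsilon> > 0. vle (\<epsilon> *\<^sub>R (y - x)) (f y - f x)))"

definition graph_arc :: "(real ^ 'n \<Rightarrow> real ^ 'n) \<Rightarrow> 'n \<Rightarrow> 'n \<Rightarrow> bool" where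
  "graph_arc f i j \<longleftrightarrow>
     filterlim (\<lambda>t. f (vexp (t *\<^sub>R axis j 1)) $ i) at_top at_top"

end

theory Submission
  imports Defs "HOL-Complex_Analysis.Cauchy_Integral_Formula"
begin


lemma strict_aux:
  fixes H :: "real \<Rightarrow> real"
  assumes cvx: "convex_on UNIV H" and mo: "mono H" and lim: "filterlim H at_top at_top"
    and loc: "\<And>s0 d0. d0 > 0 \<Longrightarrow> (\<forall>s. s0 - d0 < s \<and> s \<le> s0 \<longrightarrow> H s = H s0)
               \<Longrightarrow> \<exists>d>0. \<forall>s. \<bar>s - s0\<bar> < d \<longrightarrow> H s = H s0"
    and ab: "a < b"
  shows "H a < H b"
proof (rule ccontr)
  assume "\<not> H a < H b"
  moreover have "H a \<le> H b" using mo ab by (simp add: mono_def)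
  ultimately have eq: "H b = H a" by simp
  define C where "C = H a"
  have cont: "continuous_on UNIV H" using convex_on_continuous[OF open_UNIV cvx] .
  define S where "S = {s. a \<le> s \<and> H s \<le> C}"
  have "eventually (\<lambda>s. H s > C) at_top"
    using lim by (simp add: filterlim_at_top_dense)
  then obtain N where N: "\<And>s. s \<ge> N \<Longrightarrow> H s > C" by (auto simp: eventually_at_top_linorder)
  have bdd: "bdd_above S"
    unfolding bdd_above_def S_def by (metis (mono_tags, lifting) N linorder_not_less mem_Collect_eq order.strict_iff_not)
  have clo: "closed S"
  proof -
    have "S = {a..} \<inter> H -` {..C}" by (auto simp: S_def)
    moreover have "closed (H -` {..C})"
      using continuous_closed_vimage[of "{..C}" H] cont by (simp add: continuous_on_eq_continuous_at)
    ultimately show ?thesis by (simp add: closed_Int)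
  qed
  have bS: "b \<in> S" using eq ab by (simp add: S_def C_def)
  hence ne: "S \<noteq> {}" by auto
  define s1 where "s1 = Sup S"
  have s1S: "s1 \<in> S" using closed_contains_Sup[OF ne bdd clo] s1_def by simp
  have bs1: "b \<le> s1" using cSup_upper[OF bS bdd] s1_def by simp
  have const: "\<forall>s. s1 - (s1 - a) < s \<and> s \<le> s1 \<longrightarrow> H s = H s1"
  proof (intro allI impI)
    fix s assume "s1 - (s1 - a) < s \<and> s \<le> s1"
    hence "a \<le> s" "s \<le> s1" by auto
    hence "H a \<le> H s" "H s \<le> H s1" using mo by (auto simp: mono_def)
    moreover have "H s1 \<le> C" using s1S by (simp add: S_def)
    ultimately show "H s = H s1" by (simp add: C_def)
  qed
  have "s1 - a > 0" using bs1 ab by simp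
  from loc[OF this const] obtain d where d: "d > 0" "\<And>s. \<bar>s - s1\<bar> < d \<Longrightarrow> H s = H s1" by blast
  have "H (s1 + d/2) = H s1" using d(2)[of "s1 + d/2"] d(1) by simp
  hence "s1 + d/2 \<in> S" using s1S d(1) by (simp add: S_def)
  hence "s1 + d/2 \<le> s1" using cSup_upper[OF _ bdd] unfolding s1_def by blast
  thus False using d by simp
qed

lemma lim_aux:
  fixes H :: "real \<Rightarrow> real"
  assumes cvx: "convex_on UNIV H" and h01: "H 0 < H 1"
  shows "filterlim H at_top at_top"
proof -
  have ge: "H s \<ge> H 0 + s * (H 1 - H 0)" if s: "s \<ge> 1" for s
  proof -
    define t where "t = 1/s"
    have t: "0 \<le> t" "t \<le> 1" using s by (auto simp: t_def)
    have "H ((1-t) * 0 + t * s) \<le> (1-t) * H 0 + t * H s"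
      using convex_onD[OF cvx t, of 0 s] by simp
    moreover have ts: "t * s = 1" using s by (simp add: t_def)
    ultimately have "H 1 \<le> (1-t) * H 0 + t * H s" by simp
    hence "s * H 1 \<le> s * ((1-t) * H 0 + t * H s)" using s by (simp add: mult_left_mono)
    also have "s * ((1-t) * H 0 + t * H s) = s * H 0 - (t * s) * H 0 + (t * s) * H s" by (simp add: algebra_simps)
    also have "s * H 0 - (t * s) * H 0 + (t * s) * H s = s * H 0 - H 0 + H s" using ts by simp
    finally show ?thesis by (simp add: algebra_simps)
  qed
  have l1: "filterlim (\<lambda>s. (H 1 - H 0) * s) at_top at_top"
  proof -
    have "0 < H 1 - H 0" using h01 by simp
    from filterlim_tendsto_pos_mult_at_top[OF tendsto_const this filterlim_ident] show ?thesis .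
  qed
  have l2: "filterlim (\<lambda>s. H 0 + (H 1 - H 0) * s) at_top at_top"
    using filterlim_tendsto_add_at_top[OF tendsto_const l1] .
  have ev: "eventually (\<lambda>s. H 0 + (H 1 - H 0) * s \<le> H s) at_top"
    unfolding eventually_at_top_linorder using ge by (intro exI[of _ 1]) (auto simp: algebra_simps)
  show ?thesis
    using filterlim_at_top_mono[OF l2 ev] .
qed

lemma powser_aux:
  fixes a :: "nat \<Rightarrow> real" and F :: "real \<Rightarrow> real"
  assumes rho: "\<rho> > 0" and sm: "\<And>r. \<bar>r\<bar> < \<rho> \<Longrightarrow> (\<lambda>k. a k * r^k) sums F r"
    and d0: "d0 > 0" and left: "\<And>r. -d0 < r \<Longrightarrow> r \<le> 0 \<Longrightarrow> F r = F 0"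
    and r: "\<bar>r\<bar> < \<rho>"
  shows "F r = F 0"
proof (cases "\<exists>m>0. a m \<noteq> 0")
  case True
  then obtain m where m: "m > 0" "a m \<noteq> 0" by blast
  define a' where "a' = (\<lambda>k. if k = 0 then a 0 - F 0 else a k)"
  have sm': "(\<lambda>n. a' n * (x - 0) ^ n) sums (F x - F 0)" if "norm (x - 0) < \<rho>" for x
  proof -
    have "(\<lambda>k. a k * x^k - (if k = 0 then F 0 else 0)) sums (F x - F 0)"
      using sums_diff[OF sm[of x] sums_single[of 0 "\<lambda>_. F 0"]] that by simp
    moreover have "(\<lambda>k. a k * x^k - (if k = 0 then F 0 else 0)) = (\<lambda>n. a' n * (x - 0) ^ n)"
      by (auto simp: a'_def)
    ultimately show ?thesis by simp
  qed
  obtain s where s: "0 < s" "\<And>z. z \<in> cball 0 s - {0} \<Longrightarrow> F z - F 0 \<noteq> 0"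
    using powser_0_nonzero[of \<rho> 0 a' "\<lambda>x. F x - F 0" m] rho sm' m by (auto simp: a'_def)
  define z where "z = - min s d0 / 2"
  have "z \<in> cball 0 s - {0}" using s d0 by (auto simp: z_def dist_real_def)
  moreover have "F z = F 0" using left[of z] s d0 by (auto simp: z_def)
  ultimately show ?thesis using s by auto
next
  case False
  have z: "(\<lambda>k. a k * x^k) = (\<lambda>k. if k = 0 then a 0 else 0)" for x
  proof (rule ext)
    fix k show "a k * x^k = (if k = 0 then a 0 else 0)" using False by (cases k) auto
  qed
  have "F x = a 0" if "\<bar>x\<bar> < \<rho>" for x
    using sums_unique2[OF sm[OF that]] sums_single[of 0 "\<lambda>_. a 0"] z[of x] by simp
  then show ?thesis using r rho by simp
qed



lemma analytic_line:
  fixes g :: "real^'n \<Rightarrow> real"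
  assumes an: "real_analytic_on g pos_cone" and p: "p \<in> pos_cone"
  shows "\<exists>\<rho>>0. \<exists>a::nat\<Rightarrow>real. \<forall>r. \<bar>r\<bar> < \<rho> \<longrightarrow> (\<lambda>k. a k * r^k) sums g (p + r *\<^sub>R axis i 1)"
proof -
  obtain \<rho> c where rho: "\<rho> > 0" and hs: "\<And>y. y \<in> ball p \<rho> \<Longrightarrow>
      ((\<lambda>\<alpha>. c \<alpha> * (\<Prod>j\<in>UNIV. (y $ j - p $ j) ^ \<alpha> j)) has_sum g y) UNIV"
    using an p unfolding real_analytic_on_def by blast
  define E where "E = (\<lambda>k::nat. \<lambda>j::'n. if j = i then k else (0::nat))"
  have injE: "inj E" unfolding E_def inj_def by (metis)
  define a where "a = (\<lambda>k. c (E k))"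
  have "(\<lambda>k. a k * r^k) sums g (p + r *\<^sub>R axis i 1)" if r: "\<bar>r\<bar> < \<rho>" for r
  proof -
    define y where "y = p + r *\<^sub>R axis i 1"
    have "y \<in> ball p \<rho>" using r by (simp add: y_def dist_norm)
    note h = hs[OF this]
    define T where "T = (\<lambda>\<alpha>. c \<alpha> * (\<Prod>j\<in>UNIV. (y $ j - p $ j) ^ \<alpha> j))"
    have yp: "y $ j - p $ j = (if j = i then r else 0)" for j
      by (simp add: y_def axis_def)
    have T0: "T \<alpha> = 0" if "\<alpha> \<notin> range E" for \<alpha>
    proof -
      have "\<alpha> \<noteq> E (\<alpha> i)" using that by auto
      then obtain j where "\<alpha> j \<noteq> E (\<alpha> i) j" by auto
      hence j: "j \<noteq> i" "\<alpha> j \<noteq> 0" by (auto simp: E_def split: if_splits)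
      have "(\<Prod>j\<in>UNIV. (y $ j - p $ j) ^ \<alpha> j) = 0"
        by (rule prod_zero) (use j in \<open>auto simp: yp intro!: bexI[of _ j]\<close>)
      thus ?thesis by (simp add: T_def)
    qed
    have "(T has_sum g y) UNIV" using h by (simp add: T_def)
    hence "(T has_sum g y) (range E)"
      by (subst (asm) has_sum_cong_neutral[of "range E" UNIV T T]) (use T0 in auto)
    hence "((T \<circ> E) has_sum g y) UNIV" using has_sum_reindex[OF injE] by blast
    moreover have "(T \<circ> E) k = a k * r^k" for k
    proof -
      have "(\<Prod>j\<in>UNIV. (y $ j - p $ j) ^ E k j) = (\<Prod>j\<in>UNIV. if j = i then r^k else 1)"
        by (rule prod.cong) (auto simp: yp E_def)
      also have "\<dots> = r^k" by simp
      finally show ?thesis by (simp add: T_def a_def)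
    qed
    ultimately have "((\<lambda>k. a k * r^k) has_sum g y) UNIV" by (simp add: comp_def)
    thus ?thesis using has_sum_imp_sums y_def by blast
  qed
  thus ?thesis using rho by blast
qed



lemma vexp_pos: "vexp y \<in> pos_cone"
  by (simp add: vexp_def pos_cone_def)

lemma vexp_ln: "x \<in> pos_cone \<Longrightarrow> vexp (\<chi> j. ln (x $ j)) = x"
  by (simp add: vexp_def pos_cone_def vec_eq_iff)

lemma vexp_line:
  "vexp (w + s *\<^sub>R axis i 1) = vexp (w + s0 *\<^sub>R axis i 1) + (exp (w $ i + s) - exp (w $ i + s0)) *\<^sub>R axis i 1"
  by (simp add: vexp_def vec_eq_iff axis_def)

lemma fpos: "maps_pos_cone f \<Longrightarrow> x \<in> pos_cone \<Longrightarrow> f x $ j > 0"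
  by (auto simp: maps_pos_cone_def pos_cone_def)

lemma H_convex:
  assumes "mult_convex f"
  shows "convex_on UNIV (\<lambda>s. ln (f (vexp (w + s *\<^sub>R axis i 1)) $ i))"
proof (rule convex_onI)
  have G: "convex_on UNIV (\<lambda>y. ln (f (vexp y) $ i))" using assms by (simp add: mult_convex_def)
  fix t x y :: real assume t: "0 < t" "t < 1"
  have eq: "w + ((1 - t) *\<^sub>R x + t *\<^sub>R y) *\<^sub>R axis i 1
      = (1 - t) *\<^sub>R (w + x *\<^sub>R axis i 1) + t *\<^sub>R (w + y *\<^sub>R axis i 1)"
    by (simp add: algebra_simps scaleR_left_diff_distrib)
  show "ln (f (vexp (w + ((1 - t) *\<^sub>R x + t *\<^sub>R y) *\<^sub>R axis i 1)) $ i)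
        \<le> (1 - t) * ln (f (vexp (w + x *\<^sub>R axis i 1)) $ i) + t * ln (f (vexp (w + y *\<^sub>R axis i 1)) $ i)"
    unfolding eq using convex_onD[OF G, of t] t by simp
qed simp

lemma H_mono:
  assumes mp: "maps_pos_cone f" and op: "order_preserving f"
  shows "mono (\<lambda>s. ln (f (vexp (w + s *\<^sub>R axis i 1)) $ i))"
proof (rule monoI)
  fix s s' :: real assume ss: "s \<le> s'"
  have "vle (vexp (w + s *\<^sub>R axis i 1)) (vexp (w + s' *\<^sub>R axis i 1))"
    using ss by (auto simp: vle_def vexp_def axis_def)
  hence "vle (f (vexp (w + s *\<^sub>R axis i 1))) (f (vexp (w + s' *\<^sub>R axis i 1)))"
    using op vexp_pos unfolding order_preserving_def by blast
  hence "f (vexp (w + s *\<^sub>R axis i 1)) $ i \<le> f (vexp (w + s' *\<^sub>R axis i 1)) $ i" by (simp add: vle_def)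
  thus "ln (f (vexp (w + s *\<^sub>R axis i 1)) $ i) \<le> ln (f (vexp (w + s' *\<^sub>R axis i 1)) $ i)"
    using fpos[OF mp vexp_pos] by simp
qed

lemma H_lim:
  assumes mp: "maps_pos_cone f" and op: "order_preserving f" and hom: "homogeneous f"
    and arc: "graph_arc f i i"
  shows "filterlim (\<lambda>s. ln (f (vexp (w + s *\<^sub>R axis i 1)) $ i)) at_top at_top"
proof -
  define c where "c = exp (- norm w)"
  have c: "c > 0" by (simp add: c_def)
  have cle: "c \<le> exp (w $ j)" for j
  proof -
    have "- norm w \<le> w $ j" using component_le_norm_cart[of w j] by linarith
    thus ?thesis by (simp add: c_def)
  qed
  have ge: "c * f (vexp (s *\<^sub>R axis i 1)) $ i \<le> f (vexp (w + s *\<^sub>R axis i 1)) $ i" for s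
  proof -
    have "vle (c *\<^sub>R vexp (s *\<^sub>R axis i 1)) (vexp (w + s *\<^sub>R axis i 1))"
      unfolding vle_def
    proof
      fix j
      have "c * exp (s * axis i 1 $ j) \<le> exp (w $ j) * exp (s * axis i 1 $ j)"
        using cle[of j] by simp
      thus "(c *\<^sub>R vexp (s *\<^sub>R axis i 1)) $ j \<le> vexp (w + s *\<^sub>R axis i 1) $ j"
        by (simp add: vexp_def exp_add)
    qed
    moreover have "c *\<^sub>R vexp (s *\<^sub>R axis i 1) \<in> pos_cone"
      using c vexp_pos[of "s *\<^sub>R axis i 1"] by (simp add: pos_cone_def)
    ultimately have "vle (f (c *\<^sub>R vexp (s *\<^sub>R axis i 1))) (f (vexp (w + s *\<^sub>R axis i 1)))"
      using op vexp_pos unfolding order_preserving_def by blast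
    moreover have "f (c *\<^sub>R vexp (s *\<^sub>R axis i 1)) = c *\<^sub>R f (vexp (s *\<^sub>R axis i 1))"
      using hom c vexp_pos unfolding homogeneous_def by blast
    ultimately show ?thesis by (simp add: vle_def)
  qed
  have l1: "filterlim (\<lambda>s. c * f (vexp (s *\<^sub>R axis i 1)) $ i) at_top at_top"
    using filterlim_tendsto_pos_mult_at_top[OF tendsto_const c] arc by (simp add: graph_arc_def)
  have l2: "filterlim (\<lambda>s. f (vexp (w + s *\<^sub>R axis i 1)) $ i) at_top at_top"
    using filterlim_at_top_mono[OF l1] ge by simp
  show ?thesis using filterlim_compose[OF ln_at_top l2] by (simp add: comp_def)
qed

lemma H_loc:
  assumes mp: "maps_pos_cone f" and an: "analytic_map f" and d0: "d0 > 0"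
    and left: "\<forall>s. s0 - d0 < s \<and> s \<le> s0 \<longrightarrow>
       ln (f (vexp (w + s *\<^sub>R axis i 1)) $ i) = ln (f (vexp (w + s0 *\<^sub>R axis i 1)) $ i)"
  shows "\<exists>d>0. \<forall>s. \<bar>s - s0\<bar> < d \<longrightarrow>
       ln (f (vexp (w + s *\<^sub>R axis i 1)) $ i) = ln (f (vexp (w + s0 *\<^sub>R axis i 1)) $ i)"
proof -
  define e where "e = axis i (1::real)"
  define p where "p = vexp (w + s0 *\<^sub>R e)"
  define r0 where "r0 = exp (w $ i + s0)"
  have r0: "r0 > 0" by (simp add: r0_def)
  have line: "vexp (w + s *\<^sub>R e) = p + (exp (w $ i + s) - r0) *\<^sub>R e" for s
    unfolding p_def r0_def e_def by (rule vexp_line)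
  have "real_analytic_on (\<lambda>x. f x $ i) pos_cone" using an by (simp add: analytic_map_def)
  from analytic_line[OF this vexp_pos, of "w + s0 *\<^sub>R e" i]
  obtain \<rho> a where rho: "\<rho> > 0" and sm: "\<And>r. \<bar>r\<bar> < \<rho> \<Longrightarrow> (\<lambda>k. a k * r^k) sums (f (p + r *\<^sub>R e) $ i)"
    unfolding p_def e_def by blast
  define F where "F = (\<lambda>r. f (p + r *\<^sub>R e) $ i)"
  have F0: "F 0 = f p $ i" by (simp add: F_def)
  have pp: "f p $ i > 0" unfolding p_def using fpos[OF mp vexp_pos] .
  define d' where "d' = r0 - r0 * exp (- d0)"
  have d': "d' > 0" using r0 d0 by (simp add: d'_def)
  have left': "F r = F 0" if r: "-d' < r" "r \<le> 0" for r
  proof -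
    have "r0 * exp (- d0) < r0 + r" using r by (simp add: d'_def)
    moreover have "r0 * exp (-d0) > 0" using r0 by simp
    ultimately have pos: "r0 + r > 0" by linarith
    define s where "s = ln (r0 + r) - w $ i"
    have es: "exp (w $ i + s) = r0 + r" using pos by (simp add: s_def)
    have vs: "vexp (w + s *\<^sub>R e) = p + r *\<^sub>R e" using line[of s] es by simp
    have "ln (r0 + r) \<le> ln r0" using pos r by simp
    hence s1: "s \<le> s0" by (simp add: s_def r0_def)
    have "ln (r0 * exp (-d0)) < ln (r0 + r)" using \<open>r0 * exp (- d0) < r0 + r\<close> ln_less_cancel_iff[OF _ pos, of "r0 * exp (- d0)"] r0 by simp
    hence "ln r0 - d0 < ln (r0 + r)" using r0 by (simp add: ln_mult)
    hence s2: "s0 - d0 < s" by (simp add: s_def r0_def)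
    have "ln (f (vexp (w + s *\<^sub>R e)) $ i) = ln (f p $ i)"
      using left s1 s2 unfolding e_def p_def by blast
    hence "ln (F r) = ln (F 0)" using vs F0 by (simp add: F_def)
    moreover have "F r > 0" using fpos[OF mp vexp_pos, of "w + s *\<^sub>R e" i] vs by (simp add: F_def)
    ultimately show ?thesis using pp F0 by simp
  qed
  have all: "F r = F 0" if "\<bar>r\<bar> < \<rho>" for r
    using powser_aux[of \<rho> a F d' r] rho sm d' left' that unfolding F_def by blast
  have "continuous (at s0) (\<lambda>s. exp (w $ i + s))" by (intro continuous_intros)
  then obtain d where d: "d > 0" "\<And>s. dist s s0 < d \<Longrightarrow> dist (exp (w $ i + s)) (exp (w $ i + s0)) < \<rho>"
    using rho unfolding continuous_at_eps_delta by blast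
  have "ln (f (vexp (w + s *\<^sub>R e)) $ i) = ln (f p $ i)" if s: "\<bar>s - s0\<bar> < d" for s
  proof -
    have "\<bar>exp (w $ i + s) - r0\<bar> < \<rho>" using d(2)[of s] s by (simp add: dist_real_def r0_def)
    hence "F (exp (w $ i + s) - r0) = F 0" by (rule all)
    thus ?thesis using line[of s] F0 by (simp add: F_def)
  qed
  thus ?thesis using d(1) unfolding e_def p_def by blast
qed



theorem mainTheorem10:
  fixes f :: "real ^ 'n \<Rightarrow> real ^ 'n"
  assumes "maps_pos_cone f"
    and "order_preserving f"
    and "homogeneous f"
    and "mult_convex f"
    and "analytic_map f"
  shows "typeK_order_preserving f \<longleftrightarrow> (\<forall>i. graph_arc f i i)"
proof
  assume tk: "typeK_order_preserving f"
  show "\<forall>i. graph_arc f i i"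
  proof
    fix i :: 'n
    define H where "H = (\<lambda>s. ln (f (vexp (0 + s *\<^sub>R axis i 1)) $ i))"
    have cv: "convex_on UNIV H" unfolding H_def using H_convex[OF assms(4)] .
    define x where "x = vexp (0 + 0 *\<^sub>R axis i (1::real))"
    define y where "y = vexp (0 + 1 *\<^sub>R axis i (1::real))"
    have "vle x y" by (auto simp: x_def y_def vle_def vexp_def axis_def)
    then obtain \<epsilon> where e: "\<epsilon> > 0" "vle (\<epsilon> *\<^sub>R (y - x)) (f y - f x)"
      using tk vexp_pos unfolding typeK_order_preserving_def x_def y_def by blast
    hence "\<epsilon> * (y $ i - x $ i) \<le> f y $ i - f x $ i" by (simp add: vle_def)
    moreover have "y $ i - x $ i > 0" by (simp add: x_def y_def vexp_def)
    ultimately have "f x $ i < f y $ i" using e(1)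
      by (smt (verit, best) mult_pos_pos)
    hence "H 0 < H 1" using fpos[OF assms(1) vexp_pos] by (simp add: H_def x_def y_def)
    from lim_aux[OF cv this] have "filterlim H at_top at_top" .
    from filterlim_compose[OF exp_at_top this]
    have "filterlim (\<lambda>s. exp (H s)) at_top at_top" by (simp add: comp_def)
    moreover have "exp (H s) = f (vexp (s *\<^sub>R axis i 1)) $ i" for s
      using fpos[OF assms(1) vexp_pos] by (simp add: H_def)
    ultimately show "graph_arc f i i" by (simp add: graph_arc_def)
  qed
next
  assume arcs: "\<forall>i. graph_arc f i i"
  have strict: "f x $ j < f y $ j" if x: "x \<in> pos_cone" and y: "y \<in> pos_cone" and xy: "vle x y"
    and j: "x $ j < y $ j" for x y j
  proof -
    define w where "w = (\<chi> k. ln (x $ k))"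
    define H where "H = (\<lambda>s. ln (f (vexp (w + s *\<^sub>R axis j 1)) $ j))"
    define d where "d = ln (y $ j) - ln (x $ j)"
    have xp: "x $ j > 0" using x by (simp add: pos_cone_def)
    have d: "d > 0" using j xp by (simp add: d_def)
    have loc: "\<exists>d>0. \<forall>s. \<bar>s - s0\<bar> < d \<longrightarrow> H s = H s0"
      if "d0 > 0" "\<forall>s. s0 - d0 < s \<and> s \<le> s0 \<longrightarrow> H s = H s0" for s0 d0
      using H_loc[OF assms(1) assms(5) that(1), of s0 w j] that(2) unfolding H_def by blast
    have cv: "convex_on UNIV H" unfolding H_def by (rule H_convex[OF assms(4)])
    have mo: "mono H" unfolding H_def by (rule H_mono[OF assms(1,2)])
    have li: "filterlim H at_top at_top" unfolding H_def using H_lim[OF assms(1,2,3)] arcs by blast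
    have "H 0 < H d" using strict_aux[OF cv mo li loc d] .
    moreover have "vexp (w + 0 *\<^sub>R axis j 1) = x" using vexp_ln[OF x] by (simp add: w_def)
    ultimately have lt: "f x $ j < f (vexp (w + d *\<^sub>R axis j 1)) $ j"
      using fpos[OF assms(1) vexp_pos] fpos[OF assms(1) x] by (simp add: H_def)
    have "vle (vexp (w + d *\<^sub>R axis j 1)) y"
      unfolding vle_def
    proof
      fix k
      show "vexp (w + d *\<^sub>R axis j 1) $ k \<le> y $ k"
      proof (cases "k = j")
        case True
        have "y $ j > 0" using y by (simp add: pos_cone_def)
        thus ?thesis using True xp by (simp add: vexp_def w_def d_def axis_def)
      next
        case False
        have "x $ k > 0" using x by (simp add: pos_cone_def)
        thus ?thesis using False xy by (simp add: vexp_def w_def axis_def vle_def)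
      qed
    qed
    hence "vle (f (vexp (w + d *\<^sub>R axis j 1))) (f y)"
      using assms(2) vexp_pos y unfolding order_preserving_def by blast
    thus ?thesis using lt unfolding vle_def by (meson order_less_le_trans)
  qed
  show "typeK_order_preserving f"
    unfolding typeK_order_preserving_def
  proof (intro ballI impI)
    fix x y :: "real ^ 'n" assume x: "x \<in> pos_cone" and y: "y \<in> pos_cone" and xy: "vle x y"
    define q where "q = (\<lambda>j. if x $ j < y $ j then (f y $ j - f x $ j) / (y $ j - x $ j) else 1)"
    define \<epsilon> where "\<epsilon> = Min (range q)"
    have qpos: "q j > 0" for j
      using strict[OF x y xy, of j] by (simp add: q_def)
    have "\<epsilon> > 0" unfolding \<epsilon>_def using qpos by (simp add: Min_gr_iff)
    moreover have "vle (\<epsilon> *\<^sub>R (y - x)) (f y - f x)"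
      unfolding vle_def
    proof
      fix j
      have le: "\<epsilon> \<le> q j" unfolding \<epsilon>_def by simp
      have fxy: "f x $ j \<le> f y $ j"
        using assms(2) x y xy unfolding order_preserving_def vle_def by blast
      show "(\<epsilon> *\<^sub>R (y - x)) $ j \<le> (f y - f x) $ j"
      proof (cases "x $ j < y $ j")
        case True
        hence "\<epsilon> \<le> (f y $ j - f x $ j) / (y $ j - x $ j)" using le by (simp add: q_def)
        thus ?thesis using True by (simp add: le_divide_eq)
      next
        case False
        hence "x $ j = y $ j" using xy by (simp add: vle_def) (meson order.not_eq_order_implies_strict)
        thus ?thesis using fxy by simp
      qed
    qed
    ultimately show "\<exists>\<epsilon>>0. vle (\<epsilon> *\<^sub>R (y - x)) (f y - f x)" by blast
  qed
qed

end
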